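(* Let $\mathscr{a}\in\mathbb{R}$, $\mathscr{b}\in(\mathscr{a},\infty)$, $\rho\in(0,\infty)$, $f\in C([\mathscr{a},\mathscr{b}],\mathbb{R})$, for $\theta=(\theta_1,\theta_2,\theta_3,\theta_4)\in\mathbb{R}^4$ and $x\in\mathbb{R}$ let $\mathscr{N}^\theta(x)=\theta_3\max\{\theta_1x+\theta_2,0\}+\theta_4$ and $\mathcal{L}(\theta)=\rho\int_{\mathscr{a}}^{\mathscr{b}}(\mathscr{N}^\theta(y)-f(y))^2\,\mathrm{d}y$, let $m=\rho\int_{\mathscr{a}}^{\mathscr{b}}\big(f(x)-(\mathscr{b}-\mathscr{a})^{-1}\int_{\mathscr{a}}^{\mathscr{b}}f(y)\,\mathrm{d}y\big)^2\,\mathrm{d}x$, and let $\theta\in\mathbb{R}^4$ satisfy $\mathcal{L}(\theta)<m$. Then $\max\{\theta_1\mathscr{a}+\theta_2,\ \theta_1\mathscr{b}+\theta_2\}>0$. *)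

theory Defs
  imports "HOL-Analysis.Analysis"
begin

definition relu_net :: "real \<Rightarrow> real \<Rightarrow> real \<Rightarrow> real \<Rightarrow> real \<Rightarrow> real" where
  "relu_net t1 t2 t3 t4 x = t3 * max (t1 * x + t2) 0 + t4"

definition risk :: "real \<Rightarrow> real \<Rightarrow> real \<Rightarrow> (real \<Rightarrow> real) \<Rightarrow> real \<Rightarrow> real \<Rightarrow> real \<Rightarrow> real \<Rightarrow> real" where
  "risk a b \<rho> f t1 t2 t3 t4 = \<rho> * integral {a..b} (\<lambda>y. (relu_net t1 t2 t3 t4 y - f y)^2)"

definition risk_const :: "real \<Rightarrow> real \<Rightarrow> real \<Rightarrow> (real \<Rightarrow> real) \<Rightarrow> real" where
  "risk_const a b \<rho> f = \<rho> * integral {a..b} (\<lambda>x. (f x - (1 / (b - a)) * integral {a..b} f)^2)"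

end

theory Submission
  imports Defs
begin

lemma sq_int:
  fixes a b c :: real and f :: "real \<Rightarrow> real"
  assumes ab: "a < b" and cf: "continuous_on {a..b} f"
  shows "integral {a..b} (\<lambda>x. (f x - (1 / (b - a)) * integral {a..b} f)^2)
         \<le> integral {a..b} (\<lambda>y. (c - f y)^2)"
proof -
  define I where "I = integral {a..b} f"
  define J where "J = integral {a..b} (\<lambda>y. (f y)^2)"
  have hI: "(f has_integral I) {a..b}"
    unfolding I_def using cf integrable_continuous_interval by blast
  have c2: "continuous_on {a..b} (\<lambda>y. (f y)^2)"
    using cf by (intro continuous_intros)
  have hJ: "((\<lambda>y. (f y)^2) has_integral J) {a..b}"
    unfolding J_def using c2 integrable_continuous_interval by blast
  have gen: "((\<lambda>y. (d - f y)^2) has_integral (d^2 * (b - a) - 2 * d * I + J)) {a..b}" for d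
  proof -
    have k: "((\<lambda>y. d^2) has_integral d^2 * (b - a)) {a..b}"
      using has_integral_const_real[of "d^2" a b] ab by (simp add: mult.commute)
    have "((\<lambda>y. d^2 - 2 * d * f y + (f y)^2) has_integral (d^2 * (b - a) - 2 * d * I + J)) {a..b}"
      by (intro has_integral_add has_integral_diff k has_integral_mult_right hI hJ)
    moreover have "(\<lambda>y. d^2 - 2 * d * f y + (f y)^2) = (\<lambda>y. (d - f y)^2)"
      by (auto simp: power2_eq_square algebra_simps)
    ultimately show ?thesis by simp
  qed
  define \<mu> where "\<mu> = (1 / (b - a)) * I"
  have e1: "integral {a..b} (\<lambda>x. (f x - \<mu>)^2) = \<mu>^2 * (b - a) - 2 * \<mu> * I + J"
  proof -
    have "(\<lambda>x. (f x - \<mu>)^2) = (\<lambda>y. (\<mu> - f y)^2)" by (auto simp: power2_commute)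
    then show ?thesis using integral_unique[OF gen[of \<mu>]] by simp
  qed
  have e2: "integral {a..b} (\<lambda>y. (c - f y)^2) = c^2 * (b - a) - 2 * c * I + J"
    using gen[of c] by (rule integral_unique)
  have "c^2 * (b - a) - 2 * c * I - (\<mu>^2 * (b - a) - 2 * \<mu> * I) = (c * (b - a) - I)^2 / (b - a)"
  proof -
    define s where "s = b - a"
    have sp: "s \<noteq> 0" using ab unfolding s_def by simp
    have "c^2 * s - 2 * c * I - ((1 / s * I)^2 * s - 2 * (1 / s * I) * I) = (c * s - I)^2 / s"
      using sp by (simp add: field_simps power2_eq_square)
    then show ?thesis unfolding \<mu>_def s_def .
  qed
  moreover have "(c * (b - a) - I)^2 / (b - a) \<ge> 0" using ab by simp
  ultimately show ?thesis using e1 e2 unfolding \<mu>_def I_def by linarith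
qed

theorem lemma5p7:
  fixes a b \<rho> :: real and f :: "real \<Rightarrow> real" and t1 t2 t3 t4 :: real
  assumes "a < b" and "0 < \<rho>" and "continuous_on {a..b} f"
    and "risk a b \<rho> f t1 t2 t3 t4 < risk_const a b \<rho> f"
  shows "max (t1 * a + t2) (t1 * b + t2) > 0"
proof (rule ccontr)
  assume "\<not> ?thesis"
  hence ha: "t1 * a + t2 \<le> 0" and hb: "t1 * b + t2 \<le> 0" by auto
  have lin: "t1 * y + t2 \<le> 0" if "y \<in> {a..b}" for y
  proof (cases "t1 \<ge> 0")
    case True
    then have "t1 * y \<le> t1 * b" using that by (simp add: mult_left_mono)
    then show ?thesis using hb by linarith
  next
    case False
    then have "t1 * y \<le> t1 * a" using that by (simp add: mult_left_mono_neg)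
    then show ?thesis using ha by linarith
  qed
  have "integral {a..b} (\<lambda>y. (relu_net t1 t2 t3 t4 y - f y)^2) = integral {a..b} (\<lambda>y. (t4 - f y)^2)"
    by (rule integral_cong) (use lin in \<open>simp add: relu_net_def max_def\<close>)
  hence "risk a b \<rho> f t1 t2 t3 t4 = \<rho> * integral {a..b} (\<lambda>y. (t4 - f y)^2)"
    by (simp add: risk_def)
  moreover have "risk_const a b \<rho> f \<le> \<rho> * integral {a..b} (\<lambda>y. (t4 - f y)^2)"
    unfolding risk_const_def using sq_int[OF assms(1,3), of t4] assms(2)
    by (simp add: mult_left_mono)
  ultimately show False using assms(4) by linarith
qed

end
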